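(* Let $\Delta:\mathbb R\times(1,\infty)\to\mathbb R$ be defined by $\Delta(\alpha,\rho)=\frac1{\alpha(\alpha-1)}\Big[\frac{((\rho^\alpha-1)/\alpha)^{\alpha}((\rho-\rho^\alpha)/(1-\alpha))^{1-\alpha}}{\rho-1}-1\Big]$ for $\alpha\notin\{0,1\}$ and $\Delta(1,\rho)=\Delta(0,\rho)=\frac{\rho\ln\rho}{\rho-1}-\ln\frac{e\rho\ln\rho}{\rho-1}$. Then: (a) for every $\rho>1$, $\alpha\mapsto\Delta(\alpha,\rho)$ is convex on $\mathbb R$, symmetric around $\alpha=\tfrac12$ (i.e. $\Delta(1+\alpha,\rho)=\Delta(-\alpha,\rho)$), and has its global minimum at $\alpha=\tfrac12$; (b) $\alpha\Delta(\alpha,\rho)\le\beta\Delta(\beta,\rho)$ for $0<\alpha\le\beta<\infty$, and $(1-\beta)\Delta(\beta,\rho)\le(1-\alpha)\Delta(\alpha,\rho)$ for $-\infty<\alpha\le\beta<1$; (c) for every $\alpha\in\mathbb R$, $\rho\mapsto\Delta(\alpha,\rho)$ is monotonically increasing and continuous on $(1,\infty)$, and $\lim_{\rho\to1^+}\Delta(\alpha,\rho)=0$.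
   Context: $\Delta(\alpha,\rho)$ equals $\lim_{n\to\infty}\max_{Q\in\mathcal P_n(\rho)}D_{\mathrm A}^{(\alpha)}(Q\|U_n)$, where $\mathcal P_n(\rho)$ is the set of probability mass functions on $\{1,\dots,n\}$ with positive masses and max/min mass ratio at most $\rho$, $U_n$ is uniform, and $D_{\mathrm A}^{(\alpha)}(P\|Q)=\sum_xQ(x)u_\alpha(P(x)/Q(x))$ with $u_\alpha(t)=\frac{t^\alpha-\alpha(t-1)-1}{\alpha(\alpha-1)}$ ($\alpha\notin\{0,1\}$), $u_1(t)=t\ln t+1-t$, $u_0(t)=-\ln t$. *)

theory Defs
  imports "HOL-Analysis.Analysis"
begin

definition Delta :: "real \<Rightarrow> real \<Rightarrow> real" where
  "Delta \<alpha> \<rho> =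
     (if \<alpha> = 0 \<or> \<alpha> = 1 then
        \<rho> * ln \<rho> / (\<rho> - 1) - ln (exp 1 * \<rho> * ln \<rho> / (\<rho> - 1))
      else
        (1 / (\<alpha> * (\<alpha> - 1))) *
          (((\<rho> powr \<alpha> - 1) / \<alpha>) powr \<alpha> *
            ((\<rho> - \<rho> powr \<alpha>) / (1 - \<alpha>)) powr (1 - \<alpha>) / (\<rho> - 1) - 1))"

end

theory Submission
  imports Defs
begin

lemma ftc01:
  fixes F f :: "real \<Rightarrow> real"
  assumes "\<And>x. (F has_real_derivative f x) (at x)"
  shows "(f has_integral (F 1 - F 0)) {0..1}"
  apply (rule fundamental_theorem_of_calculus)
   apply simp
  unfolding has_real_derivative_iff_has_vector_derivative[symmetric]
  using assms has_field_derivative_at_within by blast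

definition E1 :: "real \<Rightarrow> real" where
  "E1 z = (if z = 0 then 1 else (exp z - 1) / z)"

lemma E1_has_integral: "((\<lambda>v. exp (z * v)) has_integral E1 z) {0..1}"
proof (cases "z = 0")
  case True
  then show ?thesis using has_integral_const_real[of "1::real" 0 1] by (simp add: E1_def)
next
  case False
  have "((\<lambda>v. exp (z * v)) has_integral ((\<lambda>v. exp (z * v) / z) 1 - (\<lambda>v. exp (z * v) / z) 0)) {0..1}"
    apply (rule ftc01)
    using False by (auto intro!: derivative_eq_intros)
  then show ?thesis using False by (simp add: E1_def diff_divide_distrib)
qed

lemma convex_integral01:
  fixes f :: "real \<Rightarrow> real \<Rightarrow> real"
  assumes cont: "\<And>a. continuous_on {0..1} (f a)"
    and cvx: "\<And>u. u \<in> {0..1} \<Longrightarrow> convex_on UNIV (\<lambda>a. f a u)"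
  shows "convex_on UNIV (\<lambda>a. integral {0..1} (f a))"
proof (rule convex_onI)
  fix t x y :: real
  assume t: "0 < t" "t < 1"
  have I: "\<And>a. f a integrable_on {0..1}" by (rule integrable_continuous_interval[OF cont])
  have "integral {0..1} (f ((1 - t) *\<^sub>R x + t *\<^sub>R y)) \<le> integral {0..1} (\<lambda>u. (1 - t) * f x u + t * f y u)"
    apply (rule integral_le[OF I])
     apply (intro integrable_add integrable_on_mult_right I)
    using convex_onD[OF cvx, of _ t x y] t by auto
  also have "\<dots> = (1 - t) * integral {0..1} (f x) + t * integral {0..1} (f y)"
    by (subst integral_add) (auto intro: integrable_on_mult_right I)
  finally show "integral {0..1} (f ((1 - t) *\<^sub>R x + t *\<^sub>R y)) \<le> (1 - t) * integral {0..1} (f x) + t * integral {0..1} (f y)" .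
qed simp

lemma E1_integral: "E1 z = integral {0..1} (\<lambda>v. exp (z * v))"
  by (rule integral_unique[OF E1_has_integral, symmetric])

lemma E1_convex: "convex_on UNIV E1"
proof -
  have "convex_on UNIV (\<lambda>a. integral {0..1} (\<lambda>v. exp (a * v)))"
  proof (rule convex_integral01)
    fix a :: real show "continuous_on {0..1} (\<lambda>v. exp (a * v))" by (auto intro!: continuous_intros)
  next
    fix u :: real assume u: "u \<in> {0..1}"
    show "convex_on UNIV (\<lambda>a. exp (a * u))"
    proof (rule convex_onI)
      fix t x y :: real assume "0 < t" "t < 1"
      then show "exp (((1 - t) *\<^sub>R x + t *\<^sub>R y) * u) \<le> (1 - t) * exp (x * u) + t * exp (y * u)"
        using convex_onD[OF exp_convex, of t "x*u" "y*u"] by (simp add: algebra_simps)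
    qed simp
  qed
  moreover have "E1 = (\<lambda>a. integral {0..1} (\<lambda>v. exp (a * v)))" using E1_integral by auto
  ultimately show ?thesis by simp
qed

lemma E1_pos: "E1 z > 0"
proof (cases "z = 0")
  case False
  then show ?thesis unfolding E1_def
    by (cases "z > 0") (auto simp: divide_pos_pos divide_neg_neg)
qed (simp add: E1_def)

lemma E1_cont: "continuous_on UNIV E1"
  by (rule convex_on_continuous[OF open_UNIV E1_convex])


lemma alg1: "a \<noteq> 0 \<Longrightarrow> a \<noteq> (1::real) \<Longrightarrow> (E / (1 - a) - E - G / (1 - a) + 1) / a = (G - 1 - a * (E - 1)) / (a * (a - 1))"
proof -
  assume h: "a \<noteq> 0" "a \<noteq> 1"
  have "1 - a \<noteq> 0" "a - 1 \<noteq> 0" using h by auto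
  then show ?thesis using h
    apply (simp add: divide_simps)
    apply (simp add: algebra_simps)
    done
qed

definition psi :: "real \<Rightarrow> real \<Rightarrow> real" where
  "psi a t = (if a = 0 then t - 1 - ln t else if a = 1 then t * ln t - t + 1
     else (t powr a - 1 - a * (t - 1)) / (a * (a - 1)))"

definition W :: "real \<Rightarrow> real \<Rightarrow> real \<Rightarrow> real" where
  "W y a u = y^2 * (1 - u) * exp (y * u) * E1 (y * (1 - u) * a)"

lemma W_eq:
  assumes "a \<noteq> 0"
  shows "W y a u = y / a * (exp (y * a + y * (1 - a) * u) - exp (y * u))"
proof (cases "y * (1 - u) * a = 0")
  case True
  then have "y = 0 \<or> u = 1" using assms by auto
  then show ?thesis unfolding W_def by (auto simp: algebra_simps)
next
  case False
  have e: "exp (y * a + y * (1 - a) * u) = exp (y * u) * exp (y * (1 - u) * a)"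
    by (simp add: exp_add[symmetric] algebra_simps)
  show ?thesis using False unfolding W_def E1_def e
    by (simp add: field_simps power2_eq_square)
qed

lemma W_has_integral:
  "(W y a has_integral psi a (exp y)) {0..1}"
proof (cases "a = 0")
  case True
  have "((\<lambda>u. y^2 * (1 - u) * exp (y * u)) has_integral
        ((\<lambda>u. exp (y * u) * (y * (1 - u) + 1)) 1 - (\<lambda>u. exp (y * u) * (y * (1 - u) + 1)) 0)) {0..1}"
    by (rule ftc01) (auto intro!: derivative_eq_intros simp: algebra_simps power2_eq_square)
  moreover have "W y a = (\<lambda>u. y^2 * (1 - u) * exp (y * u))"
    using True by (auto simp: W_def E1_def)
  ultimately show ?thesis using True by (simp add: psi_def algebra_simps)
next
  case a0: False
  have cong: "(W y a has_integral i) {0..1} = ((\<lambda>u. y / a * (exp (y * a + y * (1 - a) * u) - exp (y * u))) has_integral i) {0..1}" for i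
    by (rule has_integral_cong) (simp add: W_eq[OF a0])
  show ?thesis
  proof (cases "a = 1")
    case True
    have "((\<lambda>u. y / a * (exp (y * a + y * (1 - a) * u) - exp (y * u))) has_integral
        ((\<lambda>u. y * exp y * u - exp (y * u)) 1 - (\<lambda>u. y * exp y * u - exp (y * u)) 0)) {0..1}"
      by (rule ftc01) (auto intro!: derivative_eq_intros simp: True algebra_simps)
    then show ?thesis unfolding cong using True by (simp add: psi_def algebra_simps)
  next
    case False
    define F where "F u = (exp (y * a + y * (1 - a) * u) / (1 - a) - exp (y * u)) / a" for u
    have a1: "1 - a \<noteq> 0" using False by simp
    have "((\<lambda>u. y / a * (exp (y * a + y * (1 - a) * u) - exp (y * u))) has_integral (F 1 - F 0)) {0..1}"
    proof (rule ftc01)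
      fix x
      have "((\<lambda>u. exp (y * a + y * (1 - a) * u) * (1 / ((1 - a) * a)) - exp (y * u) * (1 / a)) has_real_derivative
          (exp (y * a + y * (1 - a) * x) * (y * (1 - a)) * (1 / ((1 - a) * a)) - exp (y * x) * y * (1 / a))) (at x)"
        using a0 a1 by (auto intro!: derivative_eq_intros)
      moreover have "F = (\<lambda>u. exp (y * a + y * (1 - a) * u) * (1 / ((1 - a) * a)) - exp (y * u) * (1 / a))"
        unfolding F_def using a0 a1 by (intro ext) (simp add: field_simps)
      moreover have "exp (y * a + y * (1 - a) * x) * (y * (1 - a)) * (1 / ((1 - a) * a)) - exp (y * x) * y * (1 / a)
          = y / a * (exp (y * a + y * (1 - a) * x) - exp (y * x))"
        using a0 a1 by (simp add: field_simps)
      ultimately show "(F has_real_derivative y / a * (exp (y * a + y * (1 - a) * x) - exp (y * x))) (at x)" by simp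
    qed
    moreover have "F 1 - F 0 = psi a (exp y)"
    proof -
      have e1: "y * a + y * (1 - a) * 1 = y" by (simp add: algebra_simps)
      have a2: "a - 1 \<noteq> 0" using False by simp
      have "F 1 - F 0 = (exp y / (1 - a) - exp y - exp (y * a) / (1 - a) + 1) / a"
        unfolding F_def e1 using a0 a1 by (simp add: divide_simps)
      also have "\<dots> = (exp (a * y) - 1 - a * (exp y - 1)) / (a * (a - 1))"
        using alg1[OF a0 False] by (simp add: mult.commute)
      finally show ?thesis using a0 False by (simp add: psi_def powr_def)
    qed
    ultimately show ?thesis unfolding cong by simp
  qed
qed


lemma psi_integral: "t > 0 \<Longrightarrow> psi a t = integral {0..1} (W (ln t) a)"
  using W_has_integral[of "ln t" a] by (simp add: integral_unique)

lemma W_cont: "continuous_on {0..1} (W y a)"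
proof -
  have "continuous_on {0..1} (\<lambda>u. E1 (y * (1 - u) * a))"
    by (rule continuous_on_compose2[OF E1_cont]) (auto intro!: continuous_intros)
  then show ?thesis unfolding W_def by (auto intro!: continuous_intros)
qed

lemma W_nonneg: "u \<in> {0..1} \<Longrightarrow> W y a u \<ge> 0"
  unfolding W_def using E1_pos[of "y * (1 - u) * a"] by (auto intro!: mult_nonneg_nonneg)

lemma psi_nonneg: "t > 0 \<Longrightarrow> psi a t \<ge> 0"
  unfolding psi_integral
  by (rule integral_nonneg[OF integrable_continuous_interval[OF W_cont]]) (rule W_nonneg)

lemma psi_convex_alpha: "t > 0 \<Longrightarrow> convex_on UNIV (\<lambda>a. psi a t)"
proof -
  assume t: "t > 0"
  have "convex_on UNIV (\<lambda>a. integral {0..1} (W (ln t) a))"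
  proof (rule convex_integral01[OF W_cont])
    fix u :: real assume u: "u \<in> {0..1}"
    define c where "c = (ln t)^2 * (1 - u) * exp (ln t * u)"
    define k where "k = ln t * (1 - u)"
    have c: "c \<ge> 0" unfolding c_def using u by auto
    show "convex_on UNIV (\<lambda>a. W (ln t) a u)"
    proof (rule convex_onI)
      fix s x y :: real assume s: "0 < s" "s < 1"
      have "E1 (k * ((1 - s) *\<^sub>R x + s *\<^sub>R y)) = E1 ((1 - s) *\<^sub>R (k * x) + s *\<^sub>R (k * y))"
        by (simp add: algebra_simps)
      also have "\<dots> \<le> (1 - s) * E1 (k * x) + s * E1 (k * y)"
        using convex_onD[OF E1_convex, of s "k*x" "k*y"] s by simp
      finally have "c * E1 (k * ((1 - s) *\<^sub>R x + s *\<^sub>R y)) \<le> c * ((1 - s) * E1 (k * x) + s * E1 (k * y))"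
        using c by (rule mult_left_mono)
      then show "W (ln t) ((1 - s) *\<^sub>R x + s *\<^sub>R y) u \<le> (1 - s) * W (ln t) x u + s * W (ln t) y u"
        unfolding W_def c_def k_def by (simp add: algebra_simps)
    qed simp
  qed
  then show ?thesis using psi_integral[OF t] by simp
qed

lemma aE1_mono:
  assumes "a \<le> b" shows "a * E1 (k * a) \<le> b * E1 (k * b)"
proof (cases "k = 0")
  case True then show ?thesis using assms by (simp add: E1_def)
next
  case False
  have eq: "x * E1 (k * x) = (exp (k * x) - 1) / k" for x
    using False by (cases "x = 0") (auto simp: E1_def)
  show ?thesis
  proof (cases "k > 0")
    case True
    then have "exp (k * a) \<le> exp (k * b)" using assms by (simp add: mult_left_mono)
    then show ?thesis unfolding eq using True by (simp add: divide_right_mono)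
  next
    case False
    then have k: "k < 0" using \<open>k \<noteq> 0\<close> by simp
    then have "exp (k * b) \<le> exp (k * a)" using assms by (simp add: mult_left_mono_neg)
    then show ?thesis unfolding eq using k by (simp add: divide_right_mono_neg)
  qed
qed

lemma alpha_psi_mono:
  assumes t: "t > 0" and ab: "a \<le> b" shows "a * psi a t \<le> b * psi b t"
proof -
  have I: "(\<lambda>u. x * W (ln t) x u) integrable_on {0..1}" for x
    by (intro integrable_on_mult_right integrable_continuous_interval W_cont)
  have "a * psi a t = integral {0..1} (\<lambda>u. a * W (ln t) a u)"
    using psi_integral[OF t] by simp
  also have "\<dots> \<le> integral {0..1} (\<lambda>u. b * W (ln t) b u)"
  proof (rule integral_le[OF I I])
    fix u :: real assume u: "u \<in> {0..1}"
    have "(ln t)^2 * (1 - u) * exp (ln t * u) * (a * E1 (ln t * (1 - u) * a))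
       \<le> (ln t)^2 * (1 - u) * exp (ln t * u) * (b * E1 (ln t * (1 - u) * b))"
      using u aE1_mono[OF ab, of "ln t * (1 - u)"] by (intro mult_left_mono) auto
    then show "a * W (ln t) a u \<le> b * W (ln t) b u" unfolding W_def by (simp add: algebra_simps)
  qed
  also have "\<dots> = b * psi b t" using psi_integral[OF t] by simp
  finally show ?thesis .
qed


lemma alg2:
  fixes a t t0 P Q :: real
  assumes "a \<noteq> 0" "a \<noteq> 1" "t0 > 0" "Q > 0"
  shows "(P - 1 - a * (t - 1)) / (a * (a - 1)) - (Q - 1 - a * (t0 - 1)) / (a * (a - 1)) - (Q / t0 - 1) / (a - 1) * (t - t0)
     = Q * ((P / Q) - 1 - a * (t / t0 - 1)) / (a * (a - 1))"
proof -
  have k: "a * (a - 1) \<noteq> 0" "a - 1 \<noteq> 0" using assms by auto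
  have "(Q / t0 - 1) / (a - 1) * (t - t0) = a * (Q / t0 - 1) * (t - t0) / (a * (a - 1))"
    using assms k by (simp add: field_simps)
  then have L: "(P - 1 - a * (t - 1)) / (a * (a - 1)) - (Q - 1 - a * (t0 - 1)) / (a * (a - 1)) - (Q / t0 - 1) / (a - 1) * (t - t0)
     = ((P - 1 - a * (t - 1)) - (Q - 1 - a * (t0 - 1)) - a * (Q / t0 - 1) * (t - t0)) / (a * (a - 1))"
    by (simp only: diff_divide_distrib)
  have "(P - 1 - a * (t - 1)) - (Q - 1 - a * (t0 - 1)) - a * (Q / t0 - 1) * (t - t0) = Q * ((P / Q) - 1 - a * (t / t0 - 1))"
    using assms by (simp add: field_simps)
  then show ?thesis using L by simp
qed

definition Dpsi :: "real \<Rightarrow> real \<Rightarrow> real" where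
  "Dpsi a t0 = (if a = 1 then ln t0 else (t0 powr (a - 1) - 1) / (a - 1))"

lemma psi_tangent:
  assumes t: "t > 0" and t0: "t0 > 0"
  shows "psi a t - psi a t0 - Dpsi a t0 * (t - t0) = t0 powr a * psi a (t / t0)"
proof -
  consider "a = 0" | "a = 1" | "a \<noteq> 0 \<and> a \<noteq> 1" by blast
  then show ?thesis
  proof cases
    case 1
    have "t0 powr (0 - 1) = 1 / t0" using t0 by (simp add: powr_minus_divide)
    then show ?thesis using 1 t t0 unfolding psi_def Dpsi_def
      by (simp add: ln_div field_simps)
  next
    case 2
    then show ?thesis using t t0 unfolding psi_def Dpsi_def
      by (simp add: ln_div field_simps)
  next
    case 3
    then have a: "a \<noteq> 0" "a \<noteq> 1" "a - 1 \<noteq> 0" by auto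
    have p1: "t0 powr (a - 1) = t0 powr a / t0" using t0 by (simp add: powr_diff)
    have p2: "(t / t0) powr a = t powr a / t0 powr a" using t t0 by (simp add: powr_divide)
    have q: "t0 powr a > 0" using t0 by simp
    show ?thesis using a t t0 q unfolding psi_def Dpsi_def p1 p2
      using alg2[OF a(1,2) t0 q, of "t powr a" t] by simp
  qed
qed

lemma psi_chord:
  assumes x: "x > 0" and y: "y > 0" and s: "0 \<le> s" "s \<le> 1"
  shows "psi a ((1 - s) * x + s * y) \<le> (1 - s) * psi a x + s * psi a y"
proof -
  define m where "m = (1 - s) * x + s * y"
  have m: "m > 0" unfolding m_def using x y s
    by (cases "s = 0") (auto intro: add_nonneg_pos add_pos_nonneg)
  have hx: "psi a x \<ge> psi a m + Dpsi a m * (x - m)"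
    using psi_tangent[OF x m, of a] psi_nonneg[of "x/m" a] x m by (simp add: algebra_simps)
  have hy: "psi a y \<ge> psi a m + Dpsi a m * (y - m)"
    using psi_tangent[OF y m, of a] psi_nonneg[of "y/m" a] y m by (simp add: algebra_simps)
  have "(1 - s) * psi a x + s * psi a y \<ge> (1 - s) * (psi a m + Dpsi a m * (x - m)) + s * (psi a m + Dpsi a m * (y - m))"
    using hx hy s by (intro add_mono mult_left_mono) auto
  also have "(1 - s) * (psi a m + Dpsi a m * (x - m)) + s * (psi a m + Dpsi a m * (y - m)) = psi a m"
    unfolding m_def by (simp add: algebra_simps)
  finally show ?thesis unfolding m_def .
qed

lemma psi_convex_t: "convex_on {0<..} (psi a)"
  by (rule convex_onI) (auto intro!: psi_chord[simplified] simp: convex_real_interval)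

lemma psi_cont_t: "continuous_on {0<..} (psi a)"
  by (rule convex_on_continuous[OF _ psi_convex_t]) simp

lemma psi_one: "psi a 1 = 0" by (simp add: psi_def)


definition G :: "real \<Rightarrow> real \<Rightarrow> real \<Rightarrow> real" where
  "G r a x = (x - 1) / (r - 1) * psi a (r / x) + (1 - (x - 1) / (r - 1)) * psi a (1 / x)"

definition AA :: "real \<Rightarrow> real \<Rightarrow> real" where "AA r a = (r powr a - 1) / a"
definition BB :: "real \<Rightarrow> real \<Rightarrow> real" where "BB r a = (r - r powr a) / (1 - a)"

lemma AA_pos: assumes "r > 1" "a \<noteq> 0" shows "AA r a > 0"
proof (cases "a > 0")
  case True
  then have "r powr a > 1" using assms by (simp add: gr_one_powr)
  then show ?thesis using True unfolding AA_def by simp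
next
  case False
  then have a: "a < 0" using assms by simp
  then have "r powr a < r powr 0" using assms by (intro powr_less_mono) auto
  then have "r powr a < 1" using assms by simp
  then show ?thesis using a unfolding AA_def by (simp add: divide_neg_neg)
qed

lemma BB_minus_AA: assumes "r > 1" "a \<noteq> 0" "a \<noteq> 1" shows "BB r a - AA r a = psi a r"
proof -
  have "a * (a - 1) \<noteq> 0" "1 - a \<noteq> 0" using assms by auto
  then show ?thesis using assms unfolding AA_def BB_def psi_def
    by (simp add: field_simps)
qed

lemma AA_le_BB: assumes "r > 1" "a \<noteq> 0" "a \<noteq> 1" shows "AA r a \<le> BB r a"
  using BB_minus_AA[OF assms] psi_nonneg[of r a] assms by simp

lemma BB_pos: assumes "r > 1" "a \<noteq> 0" "a \<noteq> 1" shows "BB r a > 0"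
  using AA_le_BB[OF assms] AA_pos[OF assms(1,2)] by simp

lemma rAA_minus_BB: assumes "r > 1" "a \<noteq> 0" "a \<noteq> 1" shows "r * AA r a - BB r a = r powr a * psi (1 - a) r"
proof -
  have e: "r powr a * r powr (1 - a) = r" using assms by (simp add: powr_add[symmetric])
  have "a * (a - 1) \<noteq> 0" "1 - a \<noteq> 0" "1 - a - 1 \<noteq> 0" using assms by auto
  then show ?thesis using assms e unfolding AA_def BB_def psi_def
    by (simp add: field_simps)
qed


lemma Delta_gen: "a \<noteq> 0 \<Longrightarrow> a \<noteq> 1 \<Longrightarrow>
  Delta a r = (1 / (a * (a - 1))) * (AA r a powr a * BB r a powr (1 - a) / (r - 1) - 1)"
  unfolding Delta_def AA_def BB_def by simp

lemma Delta_sym: assumes r: "r > 1" shows "Delta (1 + a) r = Delta (- a) r"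
proof -
  consider "a = 0" | "a = -1" | "a \<noteq> 0 \<and> a \<noteq> -1" by blast
  then show ?thesis
  proof cases
    case 1 then show ?thesis by (simp add: Delta_def)
  next
    case 2 then show ?thesis by (simp add: Delta_def)
  next
    case 3
    define b where "b = 1 + a"
    have b: "b \<noteq> 0" "b \<noteq> 1" using 3 unfolding b_def by auto
    have ma: "- a \<noteq> 0" "- a \<noteq> 1" using 3 by auto
    have r0: "r > 0" using r by simp
    have e1: "BB r (- a) = r powr (- a) * AA r b"
    proof -
      have "r powr (- a) * r powr b = r" unfolding b_def using r0 by (simp add: powr_add[symmetric])
      then show ?thesis unfolding AA_def BB_def b_def using b(1) unfolding b_def
        by (simp add: field_simps)
    qed
    have e2: "AA r (- a) = r powr (- a - 1) * BB r b"
    proof -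
      have "r powr (- a - 1) * r = r powr (- a)" using r0 by (simp add: powr_add[symmetric] powr_diff)
      moreover have "r powr (- a - 1) * r powr b = 1" unfolding b_def using r0 by (simp add: powr_add[symmetric])
      ultimately show ?thesis unfolding AA_def BB_def b_def using 3
        by (simp add: field_simps)
    qed
    have pA: "AA r b > 0" using AA_pos[OF r b(1)] .
    have pB: "BB r b > 0" using BB_pos[OF r b] .
    have "AA r (- a) powr (- a) * BB r (- a) powr (1 - - a)
        = (r powr (- a - 1)) powr (- a) * BB r b powr (- a) * ((r powr (- a)) powr b * AA r b powr b)"
      unfolding e1 e2 using pA pB r0 by (simp add: powr_mult b_def)
    also have "\<dots> = (r powr ((- a - 1) * (- a)) * r powr ((- a) * b)) * (AA r b powr b * BB r b powr (- a))"
      unfolding powr_powr by (simp add: ac_simps)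
    also have "r powr ((- a - 1) * (- a)) * r powr ((- a) * b) = 1"
    proof -
      have "(- a - 1) * (- a) + (- a) * b = 0" unfolding b_def by (simp add: algebra_simps)
      then show ?thesis using r0 by (simp add: powr_add[symmetric])
    qed
    finally have key: "AA r (- a) powr (- a) * BB r (- a) powr (1 - - a) = AA r b powr b * BB r b powr (1 - b)"
      unfolding b_def by simp
    have k: "- a * (- a - 1) = b * (b - 1)" unfolding b_def by (simp add: algebra_simps)
    show ?thesis
      unfolding b_def[symmetric] Delta_gen[OF b] Delta_gen[OF ma] key k ..
  qed
qed


lemma G_gen:
  assumes r: "r > 1" and a: "a \<noteq> 0" "a \<noteq> 1" and x: "x > 0"
  defines "x0 \<equiv> BB r a / AA r a"
  defines "f \<equiv> AA r a * x0 powr (1 - a) / (r - 1)"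
  shows "G r a x = Delta a r - (f * x0 powr a / x powr a) * psi a (x / x0)"
    and "1 \<le> x0" and "x0 \<le> r"
proof -
  define K where "K = a * (a - 1)"
  have K: "K \<noteq> 0" using a unfolding K_def by simp
  have A: "AA r a > 0" using AA_pos[OF r a(1)] .
  have B: "BB r a > 0" using BB_pos[OF r a] .
  have x0: "x0 > 0" unfolding x0_def using A B by simp
  have BAx: "BB r a = AA r a * x0" unfolding x0_def using A by simp
  show "1 \<le> x0" unfolding x0_def using AA_le_BB[OF r a] A by simp
  have "r powr a * psi (1 - a) r \<ge> 0" using psi_nonneg[of r "1 - a"] r by simp
  then show "x0 \<le> r" unfolding x0_def using rAA_minus_BB[OF r a] A
    by (simp add: divide_le_eq mult.commute)
  define X where "X = x powr a"
  define R where "R = r powr a"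
  define p where "p = (x - 1) / (r - 1)"
  define L where "L = p * R + 1 - p"
  have X: "X > 0" unfolding X_def using x by simp
  have r1: "r - 1 \<noteq> 0" using r by simp
  have pr: "p * (r - 1) = x - 1" unfolding p_def using r1 by simp
  have G1: "G r a x = (L / X - 1) / K"
  proof -
    have e1: "psi a (r / x) = (R / X - 1 - a * (r / x - 1)) / K"
      unfolding psi_def K_def R_def X_def using a x r by (simp add: powr_divide)
    have e2: "psi a (1 / x) = (1 / X - 1 - a * (1 / x - 1)) / K"
      unfolding psi_def K_def X_def using a x r by (simp add: powr_divide)
    have px: "p * r + (1 - p) = x" using pr by (simp add: algebra_simps)
    have "G r a x = (p * (R / X - 1 - a * (r / x - 1)) + (1 - p) * (1 / X - 1 - a * (1 / x - 1))) / K"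
      unfolding G_def p_def[symmetric] e1 e2 by (simp add: add_divide_distrib)
    also have "p * (R / X - 1 - a * (r / x - 1)) + (1 - p) * (1 / X - 1 - a * (1 / x - 1))
        = L / X - 1 - a * ((p * r + (1 - p)) / x - 1)"
      unfolding L_def using X x by (simp add: field_simps)
    also have "\<dots> = L / X - 1" using px x by simp
    finally show ?thesis .
  qed
  have D1: "Delta a r = (f - 1) / K"
  proof -
    have "AA r a powr a * BB r a powr (1 - a) = AA r a * x0 powr (1 - a)"
      unfolding BAx using A x0 by (simp add: powr_mult powr_add[symmetric] mult.assoc[symmetric])
    then show ?thesis unfolding Delta_gen[OF a] f_def K_def by simp
  qed
  have L1: "(r - 1) * L = AA r a * ((1 - a) * x0 + a * x)"
  proof -
    have "(r - 1) * L = (p * (r - 1)) * R + (r - 1) - p * (r - 1)" unfolding L_def by (simp add: algebra_simps)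
    also have "\<dots> = (x - 1) * R + r - x" unfolding pr by simp
    also have "\<dots> = x * (a * AA r a) + (1 - a) * BB r a"
      unfolding AA_def BB_def R_def using a by (simp add: field_simps)
    finally show ?thesis unfolding BAx by (simp add: algebra_simps)
  qed
  have L2: "(r - 1) * (f * x0 powr a * (1 + a * (x / x0 - 1))) = AA r a * ((1 - a) * x0 + a * x)"
  proof -
    have "x0 powr (1 - a) * x0 powr a = x0" using x0 by (simp add: powr_add[symmetric])
    then show ?thesis unfolding f_def using r1 x0 by (simp add: field_simps)
  qed
  have L3: "L = f * x0 powr a * (1 + a * (x / x0 - 1))" using L1 L2 r1 by (metis mult_left_cancel)
  have Xs: "X = x0 powr a * (x / x0) powr a" unfolding X_def using x x0 by (simp add: powr_divide)
  have ps: "psi a (x / x0) = ((x / x0) powr a - 1 - a * (x / x0 - 1)) / K"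
    unfolding psi_def K_def using a by simp
  show "G r a x = Delta a r - (f * x0 powr a / x powr a) * psi a (x / x0)"
    unfolding G1 D1 ps X_def[symmetric] L3 using K X x x0
    by (simp add: Xs field_simps)
qed


lemma G_0:
  assumes r: "r > 1" and x: "x > 0"
  shows "G r 0 x = ln x - (x - 1) / (r - 1) * ln r"
proof -
  define p where "p = (x - 1) / (r - 1)"
  have r1: "r - 1 \<noteq> 0" using r by simp
  have pr: "p * (r - 1) = x - 1" unfolding p_def using r1 by simp
  have px: "p * r + (1 - p) = x" using pr by (simp add: algebra_simps)
  have lr: "ln (r / x) = ln r - ln x" "ln (1 / x) = - ln x" using r x by (auto simp: ln_div)
  have "G r 0 x = (p * r + (1 - p)) / x - 1 - p * ln r + ln x"
    unfolding G_def p_def[symmetric] psi_def lr using x by (simp add: field_simps)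
  then have "G r 0 x = ln x - p * ln r" using px x by simp
  then show ?thesis unfolding p_def .
qed

lemma G_1:
  assumes r: "r > 1" and x: "x > 0"
  shows "G r 1 x = (x - 1) / (r - 1) * r * ln r / x - ln x"
proof -
  define p where "p = (x - 1) / (r - 1)"
  have r1: "r - 1 \<noteq> 0" using r by simp
  have pr: "p * (r - 1) = x - 1" unfolding p_def using r1 by simp
  have px: "p * r + (1 - p) = x" using pr by (simp add: algebra_simps)
  have lr: "ln (r / x) = ln r - ln x" "ln (1 / x) = - ln x" using r x by (auto simp: ln_div)
  have "G r 1 x = p * r * ln r / x - (p * r + (1 - p)) * ln x / x - (p * r + (1 - p)) / x + 1"
    unfolding G_def p_def[symmetric] psi_def lr using x by (simp add: field_simps)
  also have "\<dots> = p * r * ln r / x - ln x" unfolding px using x by simp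
  finally show ?thesis unfolding p_def .
qed

lemma Delta_0_eq:
  assumes r: "r > 1" and a: "a = 0 \<or> a = 1"
  shows "Delta a r = r * ln r / (r - 1) - 1 - ln (r * ln r / (r - 1))"
proof -
  have pos: "r * ln r / (r - 1) > 0" using r by simp
  have "ln (exp 1 * r * ln r / (r - 1)) = 1 + ln (r * ln r / (r - 1))"
  proof -
    have "exp 1 * r * ln r / (r - 1) = exp 1 * (r * ln r / (r - 1))" by simp
    also have "ln \<dots> = ln (exp 1) + ln (r * ln r / (r - 1))" using pos by (rule ln_mult_pos[OF exp_gt_zero])
    finally show ?thesis by simp
  qed
  then show ?thesis using a unfolding Delta_def by auto
qed


lemma G_0_diff:
  assumes r: "r > 1" and x: "x > 0"
  shows "Delta 0 r - G r 0 x = psi 0 (x * ln r / (r - 1))"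
proof -
  define l where "l = ln r"
  have l: "l > 0" unfolding l_def using r by simp
  have r1: "r - 1 > 0" using r by simp
  have q: "l / (r - 1) > 0" using l r1 by simp
  have e1: "ln (r * l / (r - 1)) = l + ln (l / (r - 1))"
    using ln_mult_pos[of r "l / (r - 1)"] r q unfolding l_def by simp
  have e2: "ln (x * l / (r - 1)) = ln x + ln (l / (r - 1))"
    using ln_mult_pos[of x "l / (r - 1)"] x q by simp
  have "Delta 0 r - G r 0 x = r * l / (r - 1) - 1 - ln (r * l / (r - 1)) - ln x + (x - 1) / (r - 1) * l"
    unfolding Delta_0_eq[OF r, of 0, simplified] G_0[OF r x] l_def by simp
  also have "\<dots> = x * l / (r - 1) - 1 - ln (x * l / (r - 1))"
    unfolding e1 e2 using r1 by (simp add: divide_simps) (simp add: algebra_simps)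
  finally show ?thesis unfolding psi_def l_def by simp
qed

lemma G_1_diff:
  assumes r: "r > 1" and x: "x > 0"
  shows "Delta 1 r - G r 1 x = psi 0 ((r * ln r / (r - 1)) / x)"
proof -
  define c where "c = r * ln r / (r - 1)"
  have c: "c > 0" unfolding c_def using r by simp
  have "G r 1 x = c - c / x - ln x"
    unfolding G_1[OF r x] c_def using x r by (simp add: divide_simps) (simp add: algebra_simps)
  moreover have "ln (c / x) = ln c - ln x" using c x by (simp add: ln_div)
  ultimately show ?thesis unfolding Delta_0_eq[OF r, of 1, simplified] c_def[symmetric] psi_def by simp
qed

lemma G_le_Delta:
  assumes r: "r > 1" and x: "x > 0" shows "G r a x \<le> Delta a r"
proof -
  consider "a = 0" | "a = 1" | "a \<noteq> 0 \<and> a \<noteq> 1" by blast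
  then show ?thesis
  proof cases
    case 1
    have "x * ln r / (r - 1) > 0" using r x by simp
    then show ?thesis using G_0_diff[OF r x] psi_nonneg[of "x * ln r / (r - 1)" 0] 1 by simp
  next
    case 2
    have "(r * ln r / (r - 1)) / x > 0" using r x by simp
    then show ?thesis using G_1_diff[OF r x] psi_nonneg[of "(r * ln r / (r - 1)) / x" 0] 2 by simp
  next
    case 3
    then have a: "a \<noteq> 0" "a \<noteq> 1" by auto
    define x0 where "x0 = BB r a / AA r a"
    define f where "f = AA r a * x0 powr (1 - a) / (r - 1)"
    have A: "AA r a > 0" using AA_pos[OF r a(1)] .
    have x0: "x0 > 0" unfolding x0_def using A BB_pos[OF r a] by simp
    have f: "f > 0" unfolding f_def using A x0 r by simp
    have "(f * x0 powr a / x powr a) * psi a (x / x0) \<ge> 0"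
      using f x0 x psi_nonneg[of "x / x0" a] by simp
    then show ?thesis using G_gen(1)[OF r a x] unfolding x0_def[symmetric] f_def[symmetric] by simp
  qed
qed

lemma G_attain:
  assumes r: "r > 1" shows "\<exists>x. 1 \<le> x \<and> x \<le> r \<and> G r a x = Delta a r"
proof -
  have l: "ln r > 0" "ln r \<le> r - 1" "r - 1 \<le> r * ln r"
    using r psi_nonneg[of r 0] psi_nonneg[of r 1] by (auto simp: psi_def)
  consider "a = 0" | "a = 1" | "a \<noteq> 0 \<and> a \<noteq> 1" by blast
  then show ?thesis
  proof cases
    case 1
    define x0 where "x0 = (r - 1) / ln r"
    have x0: "1 \<le> x0" "x0 \<le> r" unfolding x0_def using l r by (auto simp: field_simps)
    have "x0 * ln r / (r - 1) = 1" unfolding x0_def using l r by simp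
    then have "G r 0 x0 = Delta 0 r" using G_0_diff[OF r, of x0] x0 by (simp add: psi_def)
    then show ?thesis using x0 1 by blast
  next
    case 2
    define x0 where "x0 = r * ln r / (r - 1)"
    have "r * ln r \<le> r * (r - 1)" using l(2) r by (intro mult_left_mono) auto
    then have x0: "1 \<le> x0" "x0 \<le> r" unfolding x0_def using l r by (auto simp: field_simps)
    then have "G r 1 x0 = Delta 1 r" using G_1_diff[OF r, of x0] unfolding x0_def[symmetric] by (simp add: psi_def)
    then show ?thesis using x0 2 by blast
  next
    case 3
    then have a: "a \<noteq> 0" "a \<noteq> 1" by auto
    define x0 where "x0 = BB r a / AA r a"
    have A: "AA r a > 0" using AA_pos[OF r a(1)] .
    have x0: "x0 > 0" unfolding x0_def using A BB_pos[OF r a] by simp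
    have "G r a x0 = Delta a r" using G_gen(1)[OF r a x0] unfolding x0_def[symmetric] using x0 by (simp add: psi_def)
    then show ?thesis using G_gen(2,3)[OF r a x0] unfolding x0_def[symmetric] by blast
  qed
qed


lemma G_convex:
  assumes r: "r > 1" and x: "1 \<le> x" "x \<le> r"
  shows "convex_on UNIV (\<lambda>a. G r a x)"
proof (rule convex_onI)
  fix s y z :: real assume s: "0 < s" "s < 1"
  define p where "p = (x - 1) / (r - 1)"
  have p: "0 \<le> p" "p \<le> 1" unfolding p_def using r x by auto
  have x0: "x > 0" using x by simp
  have c1: "psi ((1 - s) *\<^sub>R y + s *\<^sub>R z) (r / x) \<le> (1 - s) * psi y (r / x) + s * psi z (r / x)"
    using convex_onD[OF psi_convex_alpha, of "r / x" s y z] r x0 s by simp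
  have c2: "psi ((1 - s) *\<^sub>R y + s *\<^sub>R z) (1 / x) \<le> (1 - s) * psi y (1 / x) + s * psi z (1 / x)"
    using convex_onD[OF psi_convex_alpha, of "1 / x" s y z] x0 s by simp
  have "p * psi ((1 - s) *\<^sub>R y + s *\<^sub>R z) (r / x) + (1 - p) * psi ((1 - s) *\<^sub>R y + s *\<^sub>R z) (1 / x)
      \<le> p * ((1 - s) * psi y (r / x) + s * psi z (r / x)) + (1 - p) * ((1 - s) * psi y (1 / x) + s * psi z (1 / x))"
    using p c1 c2 by (intro add_mono mult_left_mono) auto
  then show "G r ((1 - s) *\<^sub>R y + s *\<^sub>R z) x \<le> (1 - s) * G r y x + s * G r z x"
    unfolding G_def p_def[symmetric] by (simp add: algebra_simps)
qed simp

lemma Delta_convex: assumes r: "r > 1" shows "convex_on UNIV (\<lambda>a. Delta a r)"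
proof (rule convex_onI)
  fix s y z :: real assume s: "0 < s" "s < 1"
  define c where "c = (1 - s) *\<^sub>R y + s *\<^sub>R z"
  obtain x where x: "1 \<le> x" "x \<le> r" "G r c x = Delta c r" using G_attain[OF r] by blast
  have "G r c x \<le> (1 - s) * G r y x + s * G r z x"
    unfolding c_def using convex_onD[OF G_convex[OF r x(1,2)], of s y z] s by simp
  also have "\<dots> \<le> (1 - s) * Delta y r + s * Delta z r"
    using G_le_Delta[OF r, of x] x s by (intro add_mono mult_left_mono) auto
  finally show "Delta ((1 - s) *\<^sub>R y + s *\<^sub>R z) r \<le> (1 - s) * Delta y r + s * Delta z r"
    using x(3) unfolding c_def by simp
qed simp

lemma Delta_min: assumes r: "r > 1" shows "Delta (1/2) r \<le> Delta a r"
proof -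
  have "Delta ((1 - 1/2) *\<^sub>R a + (1/2) *\<^sub>R (1 - a)) r \<le> (1 - 1/2) * Delta a r + (1/2) * Delta (1 - a) r"
    using convex_onD[OF Delta_convex[OF r], of "1/2" a "1 - a"] by simp
  moreover have "Delta (1 - a) r = Delta a r" using Delta_sym[OF r, of "- a"] by simp
  moreover have "a / 2 + (1 - a) / 2 = (1/2::real)" by (simp add: field_simps)
  ultimately show ?thesis by simp
qed

lemma aG_mono:
  assumes r: "r > 1" and x: "1 \<le> x" "x \<le> r" and ab: "a \<le> b"
  shows "a * G r a x \<le> b * G r b x"
proof -
  define p where "p = (x - 1) / (r - 1)"
  have p: "0 \<le> p" "p \<le> 1" unfolding p_def using r x by auto
  have x0: "x > 0" using x by simp
  have "p * (a * psi a (r / x)) + (1 - p) * (a * psi a (1 / x)) \<le> p * (b * psi b (r / x)) + (1 - p) * (b * psi b (1 / x))"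
    using p alpha_psi_mono[OF _ ab, of "r / x"] alpha_psi_mono[OF _ ab, of "1 / x"] r x0
    by (intro add_mono mult_left_mono) auto
  then show ?thesis unfolding G_def p_def[symmetric] by (simp add: algebra_simps)
qed

lemma aDelta_mono:
  assumes r: "r > 1" and a: "0 < a" "a \<le> b" shows "a * Delta a r \<le> b * Delta b r"
proof -
  obtain x where x: "1 \<le> x" "x \<le> r" "G r a x = Delta a r" using G_attain[OF r] by blast
  have "a * Delta a r = a * G r a x" using x by simp
  also have "\<dots> \<le> b * G r b x" using aG_mono[OF r x(1,2) a(2)] .
  also have "\<dots> \<le> b * Delta b r" using G_le_Delta[OF r, of x b] x a by (intro mult_left_mono) auto
  finally show ?thesis .
qed

lemma bDelta_mono:
  assumes r: "r > 1" and a: "a \<le> b" "b < 1" shows "(1 - b) * Delta b r \<le> (1 - a) * Delta a r"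
proof -
  have "Delta (1 - b) r = Delta b r" using Delta_sym[OF r, of "- b"] by simp
  moreover have "Delta (1 - a) r = Delta a r" using Delta_sym[OF r, of "- a"] by simp
  moreover have "(1 - b) * Delta (1 - b) r \<le> (1 - a) * Delta (1 - a) r"
    using aDelta_mono[OF r, of "1 - b" "1 - a"] a by simp
  ultimately show ?thesis by simp
qed

lemma G_mono_r:
  assumes r: "1 < r1" "r1 \<le> r2" and x: "1 \<le> x" "x \<le> r1"
  shows "G r1 a x \<le> G r2 a x"
proof -
  define p1 where "p1 = (x - 1) / (r1 - 1)"
  define p2 where "p2 = (x - 1) / (r2 - 1)"
  define s where "s = (r1 - 1) / (r2 - 1)"
  have x0: "x > 0" using x by simp
  have p1: "0 \<le> p1" "p1 \<le> 1" unfolding p1_def using r x by auto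
  have s: "0 \<le> s" "s \<le> 1" unfolding s_def using r by auto
  have ps: "p1 * s = p2" unfolding p1_def p2_def s_def using r by simp
  have pt: "(1 - s) * (1 / x) + s * (r2 / x) = r1 / x"
    unfolding s_def using r x0 by (simp add: divide_simps) (simp add: algebra_simps)
  have ch: "psi a (r1 / x) \<le> (1 - s) * psi a (1 / x) + s * psi a (r2 / x)"
    using psi_chord[of "1 / x" "r2 / x" s a] x0 r s unfolding pt by simp
  have "G r1 a x = p1 * psi a (r1 / x) + (1 - p1) * psi a (1 / x)" unfolding G_def p1_def ..
  also have "\<dots> \<le> p1 * ((1 - s) * psi a (1 / x) + s * psi a (r2 / x)) + (1 - p1) * psi a (1 / x)"
    using ch p1 by (intro add_mono mult_left_mono) auto
  also have "\<dots> = p2 * psi a (r2 / x) + (1 - p2) * psi a (1 / x)"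
    unfolding ps[symmetric] by (simp add: algebra_simps)
  also have "\<dots> = G r2 a x" unfolding G_def p2_def ..
  finally show ?thesis .
qed

lemma Delta_mono_r: "mono_on {1<..} (Delta a)"
proof (rule mono_onI)
  fix r1 r2 :: real assume h: "r1 \<in> {1<..}" "r2 \<in> {1<..}" "r1 \<le> r2"
  then have r1: "r1 > 1" and r2: "r2 > 1" by auto
  obtain x where x: "1 \<le> x" "x \<le> r1" "G r1 a x = Delta a r1" using G_attain[OF r1] by blast
  have "Delta a r1 = G r1 a x" using x by simp
  also have "\<dots> \<le> G r2 a x" using G_mono_r[OF r1 h(3) x(1,2)] .
  also have "\<dots> \<le> Delta a r2" using G_le_Delta[OF r2, of x] x by simp
  finally show "Delta a r1 \<le> Delta a r2" .
qed


lemma Delta_cont: "continuous_on {1<..} (Delta a)"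
proof (cases "a = 0 \<or> a = 1")
  case True
  have "continuous_on {1<..} (\<lambda>r::real. r * ln r / (r - 1) - ln (exp 1 * r * ln r / (r - 1)))"
    by (intro continuous_intros) auto
  moreover have "Delta a = (\<lambda>r. r * ln r / (r - 1) - ln (exp 1 * r * ln r / (r - 1)))"
    using True by (auto simp: Delta_def)
  ultimately show ?thesis by simp
next
  case False
  then have a: "a \<noteq> 0" "a \<noteq> 1" by auto
  have "continuous_on {1<..} (\<lambda>r. (1 / (a * (a - 1))) * (((r powr a - 1) / a) powr a * ((r - r powr a) / (1 - a)) powr (1 - a) / (r - 1) - 1))"
  proof (intro continuous_intros ballI)
    fix r :: real assume "r \<in> {1<..}"
    then have r: "r > 1" by simp
    show "r \<noteq> 0" "r - 1 \<noteq> 0" using r by auto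
    show "(r powr a - 1) / a \<noteq> 0" using AA_pos[OF r a(1)] unfolding AA_def by linarith
    show "(r - r powr a) / (1 - a) \<noteq> 0" using BB_pos[OF r a] unfolding BB_def by linarith
  qed (use a in auto)
  moreover have "Delta a = (\<lambda>r. (1 / (a * (a - 1))) * (((r powr a - 1) / a) powr a * ((r - r powr a) / (1 - a)) powr (1 - a) / (r - 1) - 1))"
    using a by (auto simp: Delta_def)
  ultimately show ?thesis by simp
qed

lemma Delta_bounds:
  assumes r: "r > 1"
  shows "0 \<le> Delta a r" "Delta a r \<le> max (psi a (1 / r)) (psi a r)"
proof -
  show "0 \<le> Delta a r" using G_le_Delta[OF r, of 1 a] by (simp add: G_def psi_one)
  define M where "M = max (psi a (1 / r)) (psi a r)"
  have bnd: "psi a t \<le> M" if t: "1 / r \<le> t" "t \<le> r" for t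
  proof -
    define s where "s = (t - 1 / r) / (r - 1 / r)"
    have rr: "r - 1 / r > 0" using r less_1_mult[OF r r] by (simp add: field_simps)
    have s: "0 \<le> s" "s \<le> 1" unfolding s_def using t rr by auto
    have "(1 - s) * (1 / r) + s * r = t" unfolding s_def using rr
      by (simp add: divide_simps) (simp add: algebra_simps)
    then have "psi a t \<le> (1 - s) * psi a (1 / r) + s * psi a r"
      using psi_chord[of "1 / r" r s a] r s by simp
    also have "\<dots> \<le> (1 - s) * M + s * M" unfolding M_def using s by (intro add_mono mult_left_mono) auto
    finally show ?thesis by (simp add: algebra_simps)
  qed
  obtain x where x: "1 \<le> x" "x \<le> r" "G r a x = Delta a r" using G_attain[OF r] by blast
  define p where "p = (x - 1) / (r - 1)"
  have p: "0 \<le> p" "p \<le> 1" unfolding p_def using r x by auto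
  have rr2: "r \<le> r * r" using r by simp
  have "1 / r \<le> r / x" using x r order_trans[OF x(2) rr2] by (simp add: field_simps)
  moreover have "r / x \<le> r" using x r by (simp add: field_simps)
  ultimately have b1: "psi a (r / x) \<le> M" by (rule bnd)
  have "1 \<le> r * x" using x r less_1_mult[of r x] by (cases "x = 1") auto
  then have b2: "psi a (1 / x) \<le> M" using x r \<open>1 \<le> r * x\<close> by (intro bnd) (auto simp: field_simps)
  have "G r a x \<le> p * M + (1 - p) * M" unfolding G_def p_def[symmetric]
    using b1 b2 p by (intro add_mono mult_left_mono) auto
  then show "Delta a r \<le> M" using x by (simp add: algebra_simps)
qed

lemma Delta_lim: "(Delta a \<longlongrightarrow> 0) (at_right 1)"
proof -
  have c: "isCont (psi a) 1"
    using continuous_on_interior[OF psi_cont_t, of 1] by (simp add: interior_open)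
  have l1: "((\<lambda>r. psi a r) \<longlongrightarrow> 0) (at_right 1)"
    using isCont_tendsto_compose[OF c, of "\<lambda>r. r" "at_right 1"] by (simp add: psi_one tendsto_ident_at)
  have "((\<lambda>r::real. 1 / r) \<longlongrightarrow> 1 / 1) (at_right 1)" by (intro tendsto_intros) auto
  then have l2: "((\<lambda>r. psi a (1 / r)) \<longlongrightarrow> 0) (at_right 1)"
    using isCont_tendsto_compose[OF c] by (simp add: psi_one)
  have lm: "((\<lambda>r. max (psi a (1 / r)) (psi a r)) \<longlongrightarrow> max 0 0) (at_right 1)"
    by (intro tendsto_max l1 l2)
  show ?thesis
  proof (rule tendsto_sandwich[OF _ _ tendsto_const lm[simplified]])
    show "\<forall>\<^sub>F r in at_right 1. 0 \<le> Delta a r"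
      using eventually_at_right_less[of "1::real"] by eventually_elim (rule Delta_bounds(1))
    show "\<forall>\<^sub>F r in at_right 1. Delta a r \<le> max (psi a (1 / r)) (psi a r)"
      using eventually_at_right_less[of "1::real"] by eventually_elim (rule Delta_bounds(2))
  qed
qed

theorem theorem9:
  shows "(\<forall>\<rho>::real. \<rho> > 1 \<longrightarrow>
            convex_on UNIV (\<lambda>\<alpha>. Delta \<alpha> \<rho>)
          \<and> (\<forall>\<alpha>. Delta (1 + \<alpha>) \<rho> = Delta (- \<alpha>) \<rho>)
          \<and> (\<forall>\<alpha>. Delta (1/2) \<rho> \<le> Delta \<alpha> \<rho>))
       \<and> (\<forall>\<rho>::real. \<rho> > 1 \<longrightarrow>
            (\<forall>\<alpha> \<beta>::real. 0 < \<alpha> \<and> \<alpha> \<le> \<beta> \<longrightarrow> \<alpha> * Delta \<alpha> \<rho> \<le> \<beta> * Delta \<beta> \<rho>)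
          \<and> (\<forall>\<alpha> \<beta>::real. \<alpha> \<le> \<beta> \<and> \<beta> < 1 \<longrightarrow>
                (1 - \<beta>) * Delta \<beta> \<rho> \<le> (1 - \<alpha>) * Delta \<alpha> \<rho>))
       \<and> (\<forall>\<alpha>::real.
            mono_on {1<..} (Delta \<alpha>)
          \<and> continuous_on {1<..} (Delta \<alpha>)
          \<and> (Delta \<alpha> \<longlongrightarrow> 0) (at_right 1))"
  using Delta_convex Delta_sym Delta_min aDelta_mono bDelta_mono Delta_mono_r Delta_cont Delta_lim
  by blast

end
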